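(* Let $\Gamma$ be a compact abelian group satisfying (G1)–(G3), and let $\Lambda$ be the topological $\mathbb{N}^{\times}$-graph with vertex set $\Gamma$, morphisms $(a,g)$ ($a\in\mathbb{N}^{\times}$, $g\in\Gamma$), $r(a,g)=g$, $s(a,g)=g^a$, $d(a,g)=a$ and composition $(a,g)(b,g^a)=(ab,g)$. (1) For $g\in\Gamma$ define $\mu_g:\Omega_{\mathbb{N}^{\times}}\to\Lambda$ by $\mu_g(a,b)=(a^{-1}b,g^a)$. Then $\mu_g\in\Lambda^\infty$, and for every $\beta\in\Lambda^\infty$ we have $\beta=\mu_{r(\beta)}$. (2) $\Lambda$ is aperiodic if and only if $\operatorname{int}(\operatorname{Tor}\Gamma)=\emptyset$.
   Context: $\mathbb{N}^{\times}$ is the multiplicative semigroup of positive integers; $\Gamma$ is written multiplicatively, $\omega_a(g)=g^a$, and (G1) $\omega_a(\Gamma)$ has finite index, (G2) $\ker\omega_a$ is finite, (G3) $|\ker\omega_{ab}|=|\ker\omega_a||\ker\omega_b|$ for all $a,b\in\mathbb{N}^{\times}$. $\Lambda^1=\Gamma$ denotes the vertex set; each $\{(a,g):g\in\Gamma\}$ is a compact open copy of $\Gamma$. $\Omega_{\mathbb{N}^{\times}}$ is the $\mathbb{N}^{\times}$-graph with vertex set $\mathbb{N}^{\times}$ and morphisms the pairs $(a,b)$ with $a\mid b$, range $a$, source $b$, degree $a^{-1}b$, composition $(a,b)(b,c)=(a,c)$. An infinite path with range $v$ is a degree-preserving continuous functor $\mu:\Omega_{\mathbb{N}^{\times}}\to\Lambda$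 with $\mu(1)=v$; $\Lambda^\infty$ is the set of infinite paths and $r(\mu)=\mu(1)$. For $m\in\mathbb{N}^{\times}$, $\tau^m(\mu)(a,b):=\mu(ma,mb)$. $\Lambda$ is aperiodic if for every nonempty open set $V\subseteq\Lambda^1$ there is $\mu\in\Lambda^\infty$ with $r(\mu)\in V$ such that $m\neq n$ implies $\tau^m(\mu)\neq\tau^n(\mu)$. $\operatorname{Tor}\Gamma$ is the subgroup of elements of finite order. *)

theory Defs
  imports "HOL-Analysis.Analysis"
begin

text \<open>The compact abelian group Gamma is written additively here (type class
  topological_ab_group_add); the paper's power g^a becomes gpow a g = g + ... + g.\<close>

definition gpow :: "nat \<Rightarrow> 'a::comm_monoid_add \<Rightarrow> 'a" where
  "gpow a g = (\<Sum>i<a. g)"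

definition kerw :: "nat \<Rightarrow> 'a::comm_monoid_add set" where
  "kerw a = {g. gpow a g = 0}"

definition finite_index :: "'a::ab_group_add set \<Rightarrow> bool" where
  "finite_index H \<longleftrightarrow> finite ((\<lambda>g. (\<lambda>h. g + h) ` H) ` UNIV)"

definition Tor :: "'a::comm_monoid_add set" where
  "Tor = {g. \<exists>n>0. gpow n g = 0}"

definition lam_r :: "nat \<times> 'a \<Rightarrow> 'a" where "lam_r x = snd x"
definition lam_s :: "nat \<times> 'a::comm_monoid_add \<Rightarrow> 'a" where "lam_s x = gpow (fst x) (snd x)"
definition lam_d :: "nat \<times> 'a \<Rightarrow> nat" where "lam_d x = fst x"
definition lam_comp :: "nat \<times> 'a \<Rightarrow> nat \<times> 'a \<Rightarrow> nat \<times> 'a" where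
  "lam_comp x y = (fst x * fst y, snd x)"

definition Om_dom :: "nat \<Rightarrow> nat \<Rightarrow> bool" where
  "Om_dom a b \<longleftrightarrow> 0 < a \<and> a dvd b"

text \<open>Infinite paths: degree-preserving functors Omega -> Lambda, represented as
  functions on the morphisms (a,b) of Omega (undefined outside). Omega is discrete,
  so continuity is automatic.\<close>
definition inf_paths :: "(nat \<Rightarrow> nat \<Rightarrow> nat \<times> 'a::comm_monoid_add) set" where
  "inf_paths = {\<mu>.
     (\<forall>a b. \<not> Om_dom a b \<longrightarrow> \<mu> a b = undefined) \<and>
     (\<forall>a b. Om_dom a b \<longrightarrow> lam_d (\<mu> a b) = b div a) \<and>
     (\<forall>a b c. Om_dom a b \<and> Om_dom b c \<longrightarrow>
        lam_s (\<mu> a b) = lam_r (\<mu> b c) \<and> \<mu> a c = lam_comp (\<mu> a b) (\<mu> b c))}"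

definition path_r :: "(nat \<Rightarrow> nat \<Rightarrow> nat \<times> 'a) \<Rightarrow> 'a" where
  "path_r \<mu> = lam_r (\<mu> 1 1)"

definition tau :: "nat \<Rightarrow> (nat \<Rightarrow> nat \<Rightarrow> nat \<times> 'a) \<Rightarrow> (nat \<Rightarrow> nat \<Rightarrow> nat \<times> 'a)" where
  "tau m \<mu> = (\<lambda>a b. if Om_dom a b then \<mu> (m * a) (m * b) else undefined)"

definition mu_g :: "'a::comm_monoid_add \<Rightarrow> (nat \<Rightarrow> nat \<Rightarrow> nat \<times> 'a)" where
  "mu_g g = (\<lambda>a b. if Om_dom a b then (b div a, gpow a g) else undefined)"

definition aperiodic :: "(nat \<Rightarrow> nat \<Rightarrow> nat \<times> 'a::{comm_monoid_add,topological_space}) set \<Rightarrow> bool" where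
  "aperiodic P \<longleftrightarrow> (\<forall>V. open V \<and> V \<noteq> {} \<longrightarrow>
     (\<exists>\<mu>\<in>P. path_r \<mu> \<in> V \<and>
        (\<forall>m n. 0 < m \<and> 0 < n \<and> m \<noteq> n \<longrightarrow> tau m \<mu> \<noteq> tau n \<mu>)))"

end

theory Submission
  imports Defs
begin

lemma gpow_0[simp]: "gpow 0 g = 0" by (simp add: gpow_def)
lemma gpow_Suc: "gpow (Suc n) g = g + gpow n g" by (simp add: gpow_def add.commute)
lemma gpow_1[simp]: "gpow 1 g = g" by (simp add: gpow_def)
lemma gpow_1'[simp]: "gpow (Suc 0) g = g" by (simp add: gpow_def)
lemma gpow_add: "gpow (m + n) g = gpow m g + gpow n (g::'a::comm_monoid_add)"
  by (induction m) (auto simp: gpow_Suc add.assoc)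
lemma gpow_mult: "gpow (m * n) g = gpow n (gpow m (g::'a::comm_monoid_add))"
  by (induction n) (auto simp: gpow_Suc gpow_add add.commute)

lemma mu_in: "mu_g (g::'a::comm_monoid_add) \<in> inf_paths"
proof -
  have "gpow (b div a) (gpow a g) = gpow b g" if "Om_dom a b" for a b
  proof -
    from that have "a * (b div a) = b" by (simp add: Om_dom_def)
    then show ?thesis by (metis gpow_mult)
  qed
  moreover have "c div a = b div a * (c div b)" if "Om_dom a b" "Om_dom b c" for a b c :: nat
    using that by (auto simp: Om_dom_def elim!: dvdE)
  moreover have "Om_dom a c" if "Om_dom a b" "Om_dom b c" for a b c
    using that unfolding Om_dom_def using dvd_trans by blast
  ultimately show ?thesis
    unfolding inf_paths_def mu_g_def lam_d_def lam_s_def lam_r_def lam_comp_def by auto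
qed

lemma path_eq: assumes "\<beta> \<in> (inf_paths :: (nat \<Rightarrow> nat \<Rightarrow> nat \<times> 'a::comm_monoid_add) set)"
  shows "\<beta> = mu_g (path_r \<beta>)"
proof (intro ext)
  fix a b
  note A = assms[unfolded inf_paths_def, simplified]
  show "\<beta> a b = mu_g (path_r \<beta>) a b"
  proof (cases "Om_dom a b")
    case False then show ?thesis using A by (simp add: mu_g_def)
  next
    case True
    have a1: "Om_dom 1 a" "Om_dom 1 1" using True by (auto simp: Om_dom_def)
    have "snd (\<beta> 1 a) = snd (\<beta> 1 1)"
      using A a1 by (metis lam_comp_def snd_conv)
    moreover have "snd (\<beta> a b) = lam_s (\<beta> 1 a)"
      using A a1 True by (metis lam_r_def)
    moreover have "fst (\<beta> 1 a) = a" using A a1 by (metis lam_d_def div_by_1)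
    moreover have "fst (\<beta> a b) = b div a" using A True by (metis lam_d_def)
    ultimately show ?thesis using True
      by (simp add: mu_g_def path_r_def lam_r_def lam_s_def prod_eq_iff)
  qed
qed

lemma tau_mu: "0 < m \<Longrightarrow> tau m (mu_g g) = (\<lambda>a b. if Om_dom a b then (b div a, gpow (m*a) g) else undefined)"
  by (auto simp: tau_def mu_g_def Om_dom_def fun_eq_iff)

lemma periodic_iff:
  fixes g :: "'a::ab_group_add"
  shows "(\<exists>m n. 0 < m \<and> 0 < n \<and> m \<noteq> n \<and> tau m (mu_g g) = tau n (mu_g g)) \<longleftrightarrow> g \<in> Tor"
proof
  assume "\<exists>m n. 0 < m \<and> 0 < n \<and> m \<noteq> n \<and> tau m (mu_g g) = tau n (mu_g g)"
  then obtain m n where mn: "0 < m" "0 < n" "m \<noteq> n" "tau m (mu_g g) = tau n (mu_g g)" by blast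
  have "Om_dom 1 1" by (simp add: Om_dom_def)
  with mn have e: "gpow m g = gpow n g" using tau_mu[of m g] tau_mu[of n g]
    by (metis (no_types, lifting) mult_1_right snd_conv)
  have "\<exists>k>0. gpow k g = 0"
  proof (cases "m < n")
    case True
    then have "gpow n g = gpow (n - m) g + gpow m g" by (metis gpow_add le_add_diff_inverse2 less_imp_le)
    then show ?thesis using e True by (metis add_cancel_left_left zero_less_diff)
  next
    case False
    then have "gpow m g = gpow (m - n) g + gpow n g" using mn by (metis gpow_add le_add_diff_inverse2 linorder_neqE_nat not_less less_imp_le)
    then show ?thesis using e False mn by (metis add_cancel_left_left zero_less_diff linorder_neqE_nat)
  qed
  then show "g \<in> Tor" by (simp add: Tor_def)
next
  assume "g \<in> Tor"
  then obtain k where k: "k > 0" "gpow k g = 0" by (auto simp: Tor_def)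
  have "gpow (Suc k) g = gpow 1 g" using k by (simp add: gpow_Suc)
  then have ee: "gpow (Suc k * a) g = gpow (1 * a) g" for a by (metis gpow_mult)
  have "tau (Suc k) (mu_g g) = tau 1 (mu_g g)"
    unfolding tau_mu[OF zero_less_Suc] tau_mu[OF zero_less_one] ee ..
  then show "\<exists>m n. 0 < m \<and> 0 < n \<and> m \<noteq> n \<and> tau m (mu_g g) = tau n (mu_g g)"
  proof (intro exI conjI)
    show "tau (Suc k) (mu_g g) = tau 1 (mu_g g)" by fact
  qed (use k in auto)
qed

lemma int_char: "interior (S :: 'a::topological_space set) = {} \<longleftrightarrow> (\<forall>V. open V \<and> V \<noteq> {} \<longrightarrow> (\<exists>g\<in>V. g \<notin> S))"
proof
  assume e: "interior S = {}"
  show "\<forall>V. open V \<and> V \<noteq> {} \<longrightarrow> (\<exists>g\<in>V. g \<notin> S)"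
  proof (intro allI impI)
    fix V :: "'a set" assume V: "open V \<and> V \<noteq> {}"
    show "\<exists>g\<in>V. g \<notin> S"
    proof (rule ccontr)
      assume "\<not> (\<exists>g\<in>V. g \<notin> S)"
      then have "V \<subseteq> S" by blast
      then have "V \<subseteq> interior S" using V by (simp add: interior_maximal)
      then show False using e V by simp
    qed
  qed
next
  assume H: "\<forall>V. open V \<and> V \<noteq> {} \<longrightarrow> (\<exists>g\<in>V. g \<notin> S)"
  show "interior S = {}"
  proof (rule ccontr)
    assume "interior S \<noteq> {}"
    then have "\<exists>g\<in>interior S. g \<notin> S"
      using H open_interior by blast
    then show False using interior_subset by blast
  qed
qed


lemma ap_dir1:
  fixes \<mu> :: "nat \<Rightarrow> nat \<Rightarrow> nat \<times> 'a::ab_group_add"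
  assumes h1: "\<mu> \<in> inf_paths" and h3: "\<forall>m n. 0 < m \<and> 0 < n \<and> m \<noteq> n \<longrightarrow> tau m \<mu> \<noteq> tau n \<mu>"
  shows "path_r \<mu> \<notin> Tor"
proof
  assume "path_r \<mu> \<in> Tor"
  then obtain m n where mn: "0 < m \<and> 0 < n \<and> m \<noteq> n \<and> tau m (mu_g (path_r \<mu>)) = tau n (mu_g (path_r \<mu>))"
    using periodic_iff[of "path_r \<mu>"] by blast
  have eq: "mu_g (path_r \<mu>) = \<mu>" using path_eq[OF h1] by (rule sym)
  from mn have "0 < m \<and> 0 < n \<and> m \<noteq> n \<and> tau m \<mu> = tau n \<mu>" unfolding eq .
  then show False using h3 by blast
qed

lemma ap_dir2:
  fixes g :: "'a::ab_group_add"
  assumes "g \<notin> Tor"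
  shows "mu_g g \<in> inf_paths \<and> path_r (mu_g g) = g \<and> (\<forall>m n. 0 < m \<and> 0 < n \<and> m \<noteq> n \<longrightarrow> tau m (mu_g g) \<noteq> tau n (mu_g g))"
proof -
  have "path_r (mu_g g) = g"
    by (simp add: path_r_def mu_g_def lam_r_def Om_dom_def)
  then show ?thesis using mu_in[of g] periodic_iff[of g] assms by blast
qed

lemma ap_char:
  "aperiodic (inf_paths :: (nat \<Rightarrow> nat \<Rightarrow> nat \<times> 'a::{ab_group_add,topological_space}) set) \<longleftrightarrow>
     (\<forall>V. open V \<and> V \<noteq> {} \<longrightarrow> (\<exists>g::'a\<in>V. g \<notin> Tor))"
  unfolding aperiodic_def
proof (rule iffI; intro allI impI)
  fix V :: "'a set"
  assume H: "\<forall>V. open V \<and> V \<noteq> {} \<longrightarrow> (\<exists>\<mu>\<in>(inf_paths :: (nat \<Rightarrow> nat \<Rightarrow> nat \<times> 'a) set). path_r \<mu> \<in> V \<and>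
        (\<forall>m n. 0 < m \<and> 0 < n \<and> m \<noteq> n \<longrightarrow> tau m \<mu> \<noteq> tau n \<mu>))" and V: "open V \<and> V \<noteq> {}"
  have E: "\<exists>\<mu>\<in>(inf_paths :: (nat \<Rightarrow> nat \<Rightarrow> nat \<times> 'a) set). path_r \<mu> \<in> V \<and>
        (\<forall>m n. 0 < m \<and> 0 < n \<and> m \<noteq> n \<longrightarrow> tau m \<mu> \<noteq> tau n \<mu>)"
    by (rule H[rule_format, OF V])
  from E show "\<exists>g\<in>V. g \<notin> Tor"
  proof (rule bexE)
    fix \<mu> :: "nat \<Rightarrow> nat \<Rightarrow> nat \<times> 'a"
    assume h1: "\<mu> \<in> inf_paths" and h2: "path_r \<mu> \<in> V \<and> (\<forall>m n. 0 < m \<and> 0 < n \<and> m \<noteq> n \<longrightarrow> tau m \<mu> \<noteq> tau n \<mu>)"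
    have "path_r \<mu> \<notin> Tor" using ap_dir1[OF h1 conjunct2[OF h2]] .
    then show ?thesis using conjunct1[OF h2] by (rule rev_bexI[rotated])
  qed
next
  fix V :: "'a set"
  assume H: "\<forall>V. open V \<and> V \<noteq> {} \<longrightarrow> (\<exists>g::'a\<in>V. g \<notin> Tor)" and V: "open V \<and> V \<noteq> {}"
  have E: "\<exists>g::'a\<in>V. g \<notin> Tor" by (rule H[rule_format, OF V])
  from E show "\<exists>\<mu>\<in>(inf_paths :: (nat \<Rightarrow> nat \<Rightarrow> nat \<times> 'a) set). path_r \<mu> \<in> V \<and>
        (\<forall>m n. 0 < m \<and> 0 < n \<and> m \<noteq> n \<longrightarrow> tau m \<mu> \<noteq> tau n \<mu>)"
  proof (rule bexE)
    fix g assume g: "g \<in> V" "g \<notin> Tor"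
    note D = ap_dir2[OF g(2)]
    show ?thesis
    proof (rule bexI[of _ "mu_g g"])
      show "mu_g g \<in> inf_paths" using D by (rule conjunct1)
      show "path_r (mu_g g) \<in> V \<and> (\<forall>m n. 0 < m \<and> 0 < n \<and> m \<noteq> n \<longrightarrow> tau m (mu_g g) \<noteq> tau n (mu_g g))"
        using D g(1) by simp
    qed
  qed
qed

theorem lemma3p6:
  fixes x0 :: "'a::{topological_ab_group_add, t2_space}"
  assumes compact: "compact (UNIV :: 'a set)"
    and G1: "\<forall>a>0. finite_index (range (gpow a :: 'a \<Rightarrow> 'a))"
    and G2: "\<forall>a>0. finite (kerw a :: 'a set)"
    and G3: "\<forall>a b. 0 < a \<and> 0 < b \<longrightarrow>
               card (kerw (a * b) :: 'a set) = card (kerw a :: 'a set) * card (kerw b :: 'a set)"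
  shows "((\<forall>g::'a. mu_g g \<in> inf_paths) \<and>
         (\<forall>\<beta>\<in>(inf_paths :: (nat \<Rightarrow> nat \<Rightarrow> nat \<times> 'a) set). \<beta> = mu_g (path_r \<beta>))) \<and>
         (aperiodic (inf_paths :: (nat \<Rightarrow> nat \<Rightarrow> nat \<times> 'a) set) \<longleftrightarrow>
         interior (Tor :: 'a set) = {})"
proof -
  have p1: "\<forall>g::'a. mu_g g \<in> inf_paths" using mu_in by blast
  have p2: "\<forall>\<beta>\<in>(inf_paths :: (nat \<Rightarrow> nat \<Rightarrow> nat \<times> 'a) set). \<beta> = mu_g (path_r \<beta>)"
    using path_eq by blast
  have p3: "aperiodic (inf_paths :: (nat \<Rightarrow> nat \<Rightarrow> nat \<times> 'a) set) \<longleftrightarrow> interior (Tor :: 'a set) = {}"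
    unfolding ap_char int_char ..
  show ?thesis using p1 p2 p3 by (intro conjI)
qed

end
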